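(* Let $q \in \mathbb R_+$ be given. Then for a given $2$-tensor ${\bf T}:\Omega\to\mathbb M^{3\times3}$ and any $i,j\in\{1,2,3\}$ the following commutation identities hold: \[ \partial_r\Big[ \frac{1}{ w^q} ( w^{1+q} {\bf T}^k_i),_k \Big] = \frac{1}{ w^{1+q}} ( w^{2+q} \partial_r {\bf T}^k_i),_k + \mathcal C_i^{q+1}[{\bf T}], \] \[ \not\nabla_j\Big[ \frac{1}{ w^q} ( w^{1+q} {\bf T}^k_i),_k \Big] = \frac{1}{ w^{q}} ( w^{1+q} \not\nabla_j{\bf T}^k_i),_k + \mathcal C_{ij}^{q}[{\bf T}], \] where \[ \mathcal C_i^{q+1}[{\bf T}] = \Big(\partial_r w-\frac{ w}{r}\Big)\not\nabla_k {\bf T}^k_i+(1+q) \partial_r w,_k {\bf T}^k_i, \] \[ \mathcal C_{ij}^{q}[{\bf T}]= w \Big(\frac{y_j\not\nabla_k}{r^2} + \frac{\delta_{kj}r^2- y_k y_j}{r^3}\partial_r \Big){\bf T}^k_i + (1+q)\not\nabla_j w,_k{\bf T}^k_i \quad \text{for } j=1,2,3. \]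
   Context: Here $\Omega=B_1(\mathbf 0)\subset\mathbb R^3$, $\delta>0$, $\gamma>1$, $\alpha=\frac1{\gamma-1}$, and $w(y)=\frac{\delta(\gamma-1)}{2\gamma}(1-|y|^2)=\frac{\delta}{2(1+\alpha)}(1-r^2)$, $r=|y|$. Einstein summation is used and $F,_k=\partial_{y_k}F$. $\partial_r=\frac yr\cdot\nabla$, and $\not\nabla$ denotes the angular gradient $\not\nabla f=\nabla f-\frac yr\partial_r f$, with components $\not\nabla_i=\frac{y_j(y_j\partial_i-y_i\partial_j)}{r^2}$. *)

theory Defs
  imports "HOL-Analysis.Analysis"
begin

definition pd :: "3 \<Rightarrow> (real^3 \<Rightarrow> real) \<Rightarrow> real^3 \<Rightarrow> real" where
  "pd k f y = deriv (\<lambda>t. f (y + t *\<^sub>R axis k 1)) 0"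

definition dr :: "(real^3 \<Rightarrow> real) \<Rightarrow> real^3 \<Rightarrow> real" where
  "dr f y = (\<Sum>j\<in>UNIV. (y $ j / norm y) * pd j f y)"

definition ang :: "3 \<Rightarrow> (real^3 \<Rightarrow> real) \<Rightarrow> real^3 \<Rightarrow> real" where
  "ang i f y = pd i f y - (y $ i / norm y) * dr f y"

definition wgt :: "real \<Rightarrow> real \<Rightarrow> real^3 \<Rightarrow> real" where
  "wgt \<delta> \<gamma> y = \<delta> * (\<gamma> - 1) / (2 * \<gamma>) * (1 - (norm y)\<^sup>2)"

definition C2_on :: "(real^3) set \<Rightarrow> (real^3 \<Rightarrow> real) \<Rightarrow> bool" where
  "C2_on S f \<longleftrightarrow> (\<forall>y\<in>S. f differentiable (at y)) \<and>
     (\<forall>k. \<forall>y\<in>S. pd k f differentiable (at y)) \<and>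
     (\<forall>k l. continuous_on S (pd l (pd k f)))"

definition comp :: "(real^3 \<Rightarrow> real^3^3) \<Rightarrow> 3 \<Rightarrow> 3 \<Rightarrow> real^3 \<Rightarrow> real" where
  "comp T k i = (\<lambda>y. T y $ k $ i)"

end

theory Submission
  imports Defs
begin



lemma pd_line:
  assumes "(f has_derivative f') (at (z + s *\<^sub>R v))"
  shows "((\<lambda>t. f (z + t *\<^sub>R v)) has_real_derivative f' v) (at s)"
proof -
  have l: "((\<lambda>t. z + t *\<^sub>R v) has_derivative (\<lambda>t. t *\<^sub>R v)) (at s)"
    by (auto intro!: derivative_eq_intros)
  have "((\<lambda>t. f (z + t *\<^sub>R v)) has_derivative (\<lambda>t. f' (t *\<^sub>R v))) (at s)"
    using diff_chain_at[OF l assms] by (simp add: o_def)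
  moreover have "f' (t *\<^sub>R v) = t * f' v" for t
    using linear_cmul[OF has_derivative_linear[OF assms]] by simp
  moreover have "(\<lambda>t. t * f' v) = (*) (f' v)" by (auto simp: mult.commute)
  ultimately show ?thesis unfolding has_field_derivative_def by simp
qed

lemma pd_has:
  assumes "(f has_derivative f') (at y)"
  shows "pd k f y = f' (axis k 1)"
proof -
  have "((\<lambda>t. f (y + t *\<^sub>R axis k 1)) has_real_derivative f' (axis k 1)) (at 0)"
    by (rule pd_line) (use assms in simp)
  then show ?thesis unfolding pd_def by (rule DERIV_imp_deriv)
qed

lemma pd_frechet:
  assumes "f differentiable (at y)"
  shows "pd k f y = frechet_derivative f (at y) (axis k 1)"
  using assms frechet_derivative_works pd_has by blast

lemma pd_line':
  assumes "f differentiable (at (z + s *\<^sub>R axis k 1))"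
  shows "((\<lambda>t. f (z + t *\<^sub>R axis k 1)) has_real_derivative pd k f (z + s *\<^sub>R axis k 1)) (at s)"
proof -
  have d: "(f has_derivative frechet_derivative f (at (z + s *\<^sub>R axis k 1))) (at (z + s *\<^sub>R axis k 1))"
    using assms frechet_derivative_works by blast
  show ?thesis using pd_line[OF d] pd_has[OF d, of k] by simp
qed

lemma pd_add:
  assumes "f differentiable (at y)" "g differentiable (at y)"
  shows "pd k (\<lambda>x. f x + g x) y = pd k f y + pd k g y"
proof -
  have F: "(f has_derivative frechet_derivative f (at y)) (at y)"
   and G: "(g has_derivative frechet_derivative g (at y)) (at y)"
    using assms frechet_derivative_works by blast+
  show ?thesis using pd_has[OF has_derivative_add[OF F G]] pd_has[OF F] pd_has[OF G] by simp
qed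
lemma pd_diff:
  assumes "f differentiable (at y)" "g differentiable (at y)"
  shows "pd k (\<lambda>x. f x - g x) y = pd k f y - pd k g y"
proof -
  have F: "(f has_derivative frechet_derivative f (at y)) (at y)"
   and G: "(g has_derivative frechet_derivative g (at y)) (at y)"
    using assms frechet_derivative_works by blast+
  show ?thesis using pd_has[OF has_derivative_diff[OF F G]] pd_has[OF F] pd_has[OF G] by simp
qed
lemma pd_mult:
  assumes "f differentiable (at y)" "g differentiable (at y)"
  shows "pd k (\<lambda>x. f x * g x) y = f y * pd k g y + pd k f y * g y"
proof -
  have F: "(f has_derivative frechet_derivative f (at y)) (at y)"
   and G: "(g has_derivative frechet_derivative g (at y)) (at y)"
    using assms frechet_derivative_works by blast+
  show ?thesis using pd_has[OF has_derivative_mult[OF F G]] pd_has[OF F] pd_has[OF G] by simp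
qed
lemma pd_const: "pd k (\<lambda>x. c) y = 0"
  using pd_has[OF has_derivative_const] by simp
lemma pd_coord: "pd k (\<lambda>x. x $ l) y = (if l = k then 1 else 0)"
proof -
  have "((\<lambda>x::real^3. x $ l) has_derivative (\<lambda>x. x $ l)) (at y)"
    using bounded_linear_vec_nth bounded_linear_imp_has_derivative by blast
  then show ?thesis using pd_has by (fastforce simp: axis_def)
qed
lemma pd_sum:
  assumes "\<And>a. f a differentiable (at y)"
  shows "pd k (\<lambda>x. \<Sum>a\<in>(UNIV::3 set). f a x) y = (\<Sum>a\<in>UNIV. pd k (f a) y)"
proof -
  have F: "\<And>a. (f a has_derivative frechet_derivative (f a) (at y)) (at y)"
    using assms frechet_derivative_works by blast
  have H: "((\<lambda>x. \<Sum>a\<in>(UNIV::3 set). f a x) has_derivative (\<lambda>h. \<Sum>a\<in>UNIV. frechet_derivative (f a) (at y) h)) (at y)"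
    by (intro has_derivative_sum F)
  show ?thesis using pd_has[OF H] pd_has[OF F] by simp
qed
lemma pd_comp:
  assumes "(g has_real_derivative g') (at (f y))" "f differentiable (at y)"
  shows "pd k (\<lambda>x. g (f x)) y = g' * pd k f y"
proof -
  obtain f' where f': "(f has_derivative f') (at y)" using assms(2) differentiable_def by blast
  have "((\<lambda>x. g (f x)) has_derivative (\<lambda>h. g' * f' h)) (at y)"
    using diff_chain_at[OF f' assms(1)[unfolded has_field_derivative_def]] by (simp add: o_def mult.commute)
  then show ?thesis using pd_has f' by metis
qed
lemma pd_powr:
  assumes "f differentiable (at y)" "f y > 0"
  shows "pd k (\<lambda>x. f x powr a) y = a * f y powr (a - 1) * pd k f y"
proof -
  have "((\<lambda>u. u powr a) has_real_derivative a * f y powr (a - 1)) (at (f y))"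
    using DERIV_fun_powr[OF DERIV_ident assms(2)] by simp
  from pd_comp[OF this assms(1)] show ?thesis .
qed
lemma pd_divide:
  assumes "f differentiable (at y)" "g differentiable (at y)" "g y \<noteq> 0"
  shows "pd k (\<lambda>x. f x / g x) y = (pd k f y * g y - f y * pd k g y) / (g y)^2"
proof -
  have "((\<lambda>u. inverse u) has_real_derivative - inverse (g y ^ 2)) (at (g y))"
    using DERIV_inverse[OF assms(3), of UNIV] by (simp add: power2_eq_square)
  from pd_comp[OF this assms(2)] have i: "pd k (\<lambda>x. inverse (g x)) y = - inverse (g y ^ 2) * pd k g y" .
  have "pd k (\<lambda>x. f x / g x) y = pd k (\<lambda>x. f x * inverse (g x)) y" by (simp add: divide_inverse)
  also have "\<dots> = f y * pd k (\<lambda>x. inverse (g x)) y + pd k f y * inverse (g y)"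
    using assms by (intro pd_mult) auto
  finally have "pd k (\<lambda>x. f x / g x) y = f y * (- inverse (g y ^ 2) * pd k g y) + pd k f y * inverse (g y)"
    unfolding i .
  then show ?thesis using assms(3) by (simp add: field_simps power2_eq_square)
qed
lemma pd_norm:
  assumes "y \<noteq> 0" shows "pd k norm y = y $ k / norm y"
proof -
  have "(norm has_derivative (\<lambda>h. h \<bullet> sgn y)) (at y)" using has_derivative_norm[OF assms] by simp
  then have "pd k norm y = axis k 1 \<bullet> sgn y" by (rule pd_has)
  also have "\<dots> = y $ k / norm y" by (simp add: inner_axis' sgn_div_norm divide_inverse mult.commute)
  finally show ?thesis .
qed
lemma pd_local:
  assumes "open S" "y \<in> S" "\<And>z. z \<in> S \<Longrightarrow> f z = g z"
  shows "pd k f y = pd k g y"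
  unfolding pd_def
proof (rule deriv_cong_ev)
  have "open ((\<lambda>t::real. y + t *\<^sub>R axis k 1) -` S)"
    by (intro continuous_open_vimage assms(1)) (intro continuous_intros)
  moreover have "0 \<in> (\<lambda>t::real. y + t *\<^sub>R axis k 1) -` S" using assms(2) by simp
  ultimately have "\<forall>\<^sub>F t in nhds 0. y + t *\<^sub>R axis k 1 \<in> S"
    using eventually_nhds_in_open by fastforce
  then show "\<forall>\<^sub>F t in nhds 0. f (y + t *\<^sub>R axis k 1) = g (y + t *\<^sub>R axis k 1)"
    by eventually_elim (use assms(3) in auto)
qed simp



lemma mixed_mvt:
  fixes f :: "real^3 \<Rightarrow> real"
  assumes h: "h > 0"
    and sq: "\<And>s t. 0 \<le> s \<Longrightarrow> s \<le> h \<Longrightarrow> 0 \<le> t \<Longrightarrow> t \<le> h \<Longrightarrow> y + s *\<^sub>R axis k 1 + t *\<^sub>R axis l 1 \<in> S"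
    and df: "\<And>z. z \<in> S \<Longrightarrow> f differentiable (at z)"
    and dpf: "\<And>z. z \<in> S \<Longrightarrow> pd k f differentiable (at z)"
  shows "\<exists>s t. 0 < s \<and> s < h \<and> 0 < t \<and> t < h \<and>
    f (y + h *\<^sub>R axis k 1 + h *\<^sub>R axis l 1) - f (y + h *\<^sub>R axis k 1) - f (y + h *\<^sub>R axis l 1) + f y
      = h * (h * pd l (pd k f) (y + s *\<^sub>R axis k 1 + t *\<^sub>R axis l 1))"
proof -
  let ?u = "axis k 1 :: real^3" and ?v = "axis l 1 :: real^3"
  define g where "g s = f ((y + h *\<^sub>R ?v) + s *\<^sub>R ?u) - f (y + s *\<^sub>R ?u)" for s
  have "DERIV g s :> pd k f ((y + h *\<^sub>R ?v) + s *\<^sub>R ?u) - pd k f (y + s *\<^sub>R ?u)"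
    if "0 \<le> s" "s \<le> h" for s
  proof -
    have m1: "y + h *\<^sub>R ?v + s *\<^sub>R ?u \<in> S" using sq[of s h] that h by (simp add: algebra_simps)
    have m2: "y + s *\<^sub>R ?u \<in> S" using sq[of s 0] that h by simp
    show ?thesis unfolding g_def
      by (intro DERIV_diff pd_line' df m1 m2)
  qed
  from MVT2[OF h this] obtain s where s: "0 < s" "s < h"
    and gs: "g h - g 0 = (h - 0) * (pd k f ((y + h *\<^sub>R ?v) + s *\<^sub>R ?u) - pd k f (y + s *\<^sub>R ?u))"
    by blast
  define \<phi> where "\<phi> t = pd k f ((y + s *\<^sub>R ?u) + t *\<^sub>R ?v)" for t
  have "DERIV \<phi> t :> pd l (pd k f) ((y + s *\<^sub>R ?u) + t *\<^sub>R ?v)" if "0 \<le> t" "t \<le> h" for t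
    unfolding \<phi>_def using s that by (intro pd_line' dpf sq) auto
  from MVT2[OF h this] obtain t where t: "0 < t" "t < h"
    and pt: "\<phi> h - \<phi> 0 = (h - 0) * pd l (pd k f) ((y + s *\<^sub>R ?u) + t *\<^sub>R ?v)"
    by blast
  have "f (y + h *\<^sub>R ?u + h *\<^sub>R ?v) - f (y + h *\<^sub>R ?u) - f (y + h *\<^sub>R ?v) + f y = g h - g 0"
    unfolding g_def by (simp add: algebra_simps)
  also have "\<dots> = h * (\<phi> h - \<phi> 0)" using gs unfolding \<phi>_def by (simp add: algebra_simps)
  also have "\<dots> = h * (h * pd l (pd k f) (y + s *\<^sub>R ?u + t *\<^sub>R ?v))" using pt by simp
  finally show ?thesis using s t by blast
qed

lemma pd_sym:
  fixes f :: "real^3 \<Rightarrow> real"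
  assumes S: "open S" "y \<in> S"
    and df: "\<And>z. z \<in> S \<Longrightarrow> f differentiable (at z)"
    and dpf: "\<And>m z. z \<in> S \<Longrightarrow> pd m f differentiable (at z)"
    and c: "\<And>m n. continuous_on S (pd n (pd m f))"
  shows "pd l (pd k f) y = pd k (pd l f) y"
proof (rule ccontr)
  let ?A = "pd l (pd k f) y" and ?B = "pd k (pd l f) y"
  assume ne: "?A \<noteq> ?B"
  define \<epsilon> where "\<epsilon> = \<bar>?A - ?B\<bar> / 3"
  have \<epsilon>: "\<epsilon> > 0" using ne by (simp add: \<epsilon>_def)
  obtain d1 where d1: "d1 > 0" "\<And>z. z \<in> S \<Longrightarrow> dist z y < d1 \<Longrightarrow> dist (pd l (pd k f) z) ?A < \<epsilon>"
    using c[where m=k and n=l] S(2) \<epsilon> unfolding continuous_on_iff by metis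
  obtain d2 where d2: "d2 > 0" "\<And>z. z \<in> S \<Longrightarrow> dist z y < d2 \<Longrightarrow> dist (pd k (pd l f) z) ?B < \<epsilon>"
    using c[where m=l and n=k] S(2) \<epsilon> unfolding continuous_on_iff by metis
  obtain e where e: "e > 0" "ball y e \<subseteq> S" using S openE by blast
  define h where "h = min (min d1 d2) e / 3"
  have h: "h > 0" using d1 d2 e by (simp add: h_def)
  have near: "dist (y + s *\<^sub>R axis a 1 + t *\<^sub>R axis b 1) y < min (min d1 d2) e"
    if "0 \<le> s" "s \<le> h" "0 \<le> t" "t \<le> h" for s t and a b :: 3
  proof -
    have "dist (y + s *\<^sub>R axis a 1 + t *\<^sub>R axis b 1) y = norm (s *\<^sub>R axis a 1 + t *\<^sub>R (axis b 1::real^3))"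
      by (simp add: dist_norm)
    also have "\<dots> \<le> norm (s *\<^sub>R (axis a 1::real^3)) + norm (t *\<^sub>R (axis b 1::real^3))" by (rule norm_triangle_ineq)
    also have "\<dots> = s + t" using that by simp
    also have "\<dots> < min (min d1 d2) e" using that h unfolding h_def by linarith
    finally show ?thesis .
  qed
  have inS: "y + s *\<^sub>R axis a 1 + t *\<^sub>R axis b 1 \<in> S"
    if "0 \<le> s" "s \<le> h" "0 \<le> t" "t \<le> h" for s t and a b :: 3
    using near[OF that, of a b] e(2) by (auto simp: dist_commute)
  obtain s1 t1 where st1: "0 < s1" "s1 < h" "0 < t1" "t1 < h"
    "f (y + h *\<^sub>R axis k 1 + h *\<^sub>R axis l 1) - f (y + h *\<^sub>R axis k 1) - f (y + h *\<^sub>R axis l 1) + f y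
      = h * (h * pd l (pd k f) (y + s1 *\<^sub>R axis k 1 + t1 *\<^sub>R axis l 1))"
    using mixed_mvt[OF h inS df dpf] by blast
  obtain s2 t2 where st2: "0 < s2" "s2 < h" "0 < t2" "t2 < h"
    "f (y + h *\<^sub>R axis l 1 + h *\<^sub>R axis k 1) - f (y + h *\<^sub>R axis l 1) - f (y + h *\<^sub>R axis k 1) + f y
      = h * (h * pd k (pd l f) (y + s2 *\<^sub>R axis l 1 + t2 *\<^sub>R axis k 1))"
    using mixed_mvt[OF h inS df dpf] by blast
  have "y + h *\<^sub>R axis l 1 + h *\<^sub>R axis k 1 = y + h *\<^sub>R axis k 1 + h *\<^sub>R axis l 1"
    by (simp add: algebra_simps)
  note st2' = st2(5)[unfolded this]
  have "h * (h * pd l (pd k f) (y + s1 *\<^sub>R axis k 1 + t1 *\<^sub>R axis l 1)) = h * (h * pd k (pd l f) (y + s2 *\<^sub>R axis l 1 + t2 *\<^sub>R axis k 1))"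
    using st1(5) st2' by linarith
  then have eq: "pd l (pd k f) (y + s1 *\<^sub>R axis k 1 + t1 *\<^sub>R axis l 1) = pd k (pd l f) (y + s2 *\<^sub>R axis l 1 + t2 *\<^sub>R axis k 1)"
    using h by simp
  have a1: "dist (pd l (pd k f) (y + s1 *\<^sub>R axis k 1 + t1 *\<^sub>R axis l 1)) ?A < \<epsilon>"
    using st1 near[of s1 t1 k l] inS[of s1 t1 k l] by (intro d1(2)) auto
  have a2: "dist (pd k (pd l f) (y + s2 *\<^sub>R axis l 1 + t2 *\<^sub>R axis k 1)) ?B < \<epsilon>"
    using st2 near[of s2 t2 l k] inS[of s2 t2 l k] by (intro d2(2)) auto
  from a1 a2 eq have "\<bar>?A - ?B\<bar> < 2 * \<epsilon>" by (simp add: dist_real_def)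
  then show False using \<epsilon> unfolding \<epsilon>_def by simp
qed





lemma diff_coord[simp]: "(\<lambda>x::real^3. x $ l) differentiable (at y)"
  using bounded_linear_vec_nth bounded_linear_imp_differentiable by blast

definition cw :: "real \<Rightarrow> real \<Rightarrow> real" where "cw \<delta> \<gamma> = \<delta> * (\<gamma> - 1) / (2 * \<gamma>)"

lemma wgt_eq: "wgt \<delta> \<gamma> = (\<lambda>z. cw \<delta> \<gamma> * (1 - (\<Sum>l\<in>UNIV. z $ l * z $ l)))"
  by (auto simp: wgt_def cw_def power2_norm_eq_inner inner_vec_def fun_eq_iff)

lemma diff_wgt[simp]: "wgt \<delta> \<gamma> differentiable (at y)"
  unfolding wgt_eq by simp

lemma pd_wgt: "pd k (wgt \<delta> \<gamma>) = (\<lambda>z. - 2 * cw \<delta> \<gamma> * z $ k)"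
proof
  fix z :: "real^3"
  show "pd k (wgt \<delta> \<gamma>) z = - 2 * cw \<delta> \<gamma> * z $ k"
    unfolding wgt_eq
    by (simp add: pd_add pd_mult pd_diff pd_const pd_sum pd_coord sum_3)
       (use exhaust_3[of k] in auto)
qed

lemma pd_minus: "f differentiable (at y) \<Longrightarrow> pd k (\<lambda>x. - f x) y = - pd k f y"
proof -
  assume "f differentiable (at y)"
  then have F: "(f has_derivative frechet_derivative f (at y)) (at y)" using frechet_derivative_works by blast
  show ?thesis using pd_has[OF has_derivative_minus[OF F]] pd_has[OF F] by simp
qed

lemma diff_powr[simp]:
  fixes f :: "real^3 \<Rightarrow> real"
  assumes "f differentiable (at y)" "f y > 0"
  shows "(\<lambda>x. f x powr a) differentiable (at y)"
proof -
  obtain f' where "(f has_derivative f') (at y)" using assms(1) differentiable_def by blast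
  from has_derivative_powr[of f f' y UNIV "\<lambda>_. a" "\<lambda>_. 0", OF this has_derivative_const assms(2)]
  show ?thesis by (auto intro: differentiableI)
qed

lemma pd_wpow_sum:
  fixes g :: "3 \<Rightarrow> real^3 \<Rightarrow> real"
  assumes W: "wgt \<delta> \<gamma> y > 0" and g: "\<And>k. g k differentiable (at y)" and b: "b = 1 + a"
  shows "(1 / wgt \<delta> \<gamma> y powr a) * (\<Sum>k\<in>UNIV. pd k (\<lambda>x. wgt \<delta> \<gamma> x powr b * g k x) y)
     = (\<Sum>k\<in>UNIV. wgt \<delta> \<gamma> y * pd k (g k) y + b * pd k (wgt \<delta> \<gamma>) y * g k y)"
proof -
  have e: "pd k (\<lambda>x. wgt \<delta> \<gamma> x powr b * g k x) y
      = wgt \<delta> \<gamma> y powr b * pd k (g k) y + b * wgt \<delta> \<gamma> y powr (b - 1) * pd k (wgt \<delta> \<gamma>) y * g k y" for k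
    using W g by (simp add: pd_mult pd_powr)
  have p1: "wgt \<delta> \<gamma> y powr b = wgt \<delta> \<gamma> y * wgt \<delta> \<gamma> y powr a"
    using W by (simp add: b powr_add)
  have p2: "wgt \<delta> \<gamma> y powr (b - 1) = wgt \<delta> \<gamma> y powr a" by (simp add: b)
  show ?thesis unfolding e p1 p2 sum_distrib_left using W
    by (intro sum.cong refl) (simp add: field_simps)
qed

lemma cw_pos: "\<delta> > 0 \<Longrightarrow> \<gamma> > 1 \<Longrightarrow> cw \<delta> \<gamma> > 0"
  by (simp add: cw_def)

lemma wgt_cw: "wgt \<delta> \<gamma> z = cw \<delta> \<gamma> * (1 - (norm z)\<^sup>2)"
  by (simp add: wgt_def cw_def)

lemma wgt_pos: "\<delta> > 0 \<Longrightarrow> \<gamma> > 1 \<Longrightarrow> z \<in> ball 0 1 \<Longrightarrow> wgt \<delta> \<gamma> z > 0"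
proof -
  assume a: "\<delta> > 0" "\<gamma> > 1" "z \<in> ball 0 1"
  then have "norm z < 1" by simp
  then have "(norm z)\<^sup>2 < 1" by (simp add: abs_square_less_1)
  then show ?thesis unfolding wgt_cw using cw_pos[OF a(1,2)] by simp
qed

theorem lemma4p3:
  fixes \<delta> \<gamma> q :: real and T :: "real^3 \<Rightarrow> real^3^3" and i j :: 3 and y :: "real^3"
  assumes "\<delta> > 0" and "\<gamma> > 1" and "q > 0"
    and "\<And>k l. C2_on (ball 0 1) (comp T k l)"
    and "y \<in> ball 0 1" and "y \<noteq> 0"
  shows
   "(dr (\<lambda>z. (1 / wgt \<delta> \<gamma> z powr q) *
          (\<Sum>k\<in>UNIV. pd k (\<lambda>x. wgt \<delta> \<gamma> x powr (1 + q) * comp T k i x) z)) y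
    = (1 / wgt \<delta> \<gamma> y powr (1 + q)) *
          (\<Sum>k\<in>UNIV. pd k (\<lambda>x. wgt \<delta> \<gamma> x powr (2 + q) * dr (comp T k i) x) y)
      + ((dr (wgt \<delta> \<gamma>) y - wgt \<delta> \<gamma> y / norm y) * (\<Sum>k\<in>UNIV. ang k (comp T k i) y)
         + (1 + q) * (\<Sum>k\<in>UNIV. dr (pd k (wgt \<delta> \<gamma>)) y * comp T k i y)))
   \<and>
   (ang j (\<lambda>z. (1 / wgt \<delta> \<gamma> z powr q) *
          (\<Sum>k\<in>UNIV. pd k (\<lambda>x. wgt \<delta> \<gamma> x powr (1 + q) * comp T k i x) z)) y
    = (1 / wgt \<delta> \<gamma> y powr q) *
          (\<Sum>k\<in>UNIV. pd k (\<lambda>x. wgt \<delta> \<gamma> x powr (1 + q) * ang j (comp T k i) x) y)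
      + (wgt \<delta> \<gamma> y *
           (\<Sum>k\<in>UNIV. (y $ j / (norm y)\<^sup>2) * ang k (comp T k i) y
              + (((if k = j then 1 else 0) * (norm y)\<^sup>2 - y $ k * y $ j) / (norm y) ^ 3)
                * dr (comp T k i) y)
         + (1 + q) * (\<Sum>k\<in>UNIV. ang j (pd k (wgt \<delta> \<gamma>)) y * comp T k i y)))"
proof -
  note a = assms
  have cpos: "cw \<delta> \<gamma> > 0" using cw_pos a by blast
  have Wpos: "\<And>z. z \<in> ball 0 1 \<Longrightarrow> wgt \<delta> \<gamma> z > 0" using wgt_pos a by blast
  have yb: "y \<in> ball 0 1" by fact
  have dT: "\<And>k l z. z \<in> ball 0 1 \<Longrightarrow> comp T k l differentiable (at z)"
    using a(4) unfolding C2_on_def by blast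
  have dpT: "\<And>m k l z. z \<in> ball 0 1 \<Longrightarrow> pd m (comp T k l) differentiable (at z)"
    using a(4) unfolding C2_on_def by blast
  have cT: "\<And>m n k l. continuous_on (ball 0 1) (pd n (pd m (comp T k l)))"
    using a(4) unfolding C2_on_def by blast
  have sym: "\<And>m n k l. pd n (pd m (comp T k l)) y = pd m (pd n (comp T k l)) y"
    by (rule pd_sym[OF open_ball yb dT dpT cT])
  have inner: "(1 / wgt \<delta> \<gamma> z powr q) * (\<Sum>k\<in>UNIV. pd k (\<lambda>x. wgt \<delta> \<gamma> x powr (1 + q) * comp T k i x) z)
     = (\<Sum>k\<in>UNIV. wgt \<delta> \<gamma> z * pd k (comp T k i) z - 2 * (1 + q) * cw \<delta> \<gamma> * z $ k * comp T k i z)"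
    if z: "z \<in> ball 0 1" for z
  proof -
    have wz: "wgt \<delta> \<gamma> z > 0" using Wpos z by blast
    have "pd k (\<lambda>x. wgt \<delta> \<gamma> x powr (1 + q) * comp T k i x) z
        = wgt \<delta> \<gamma> z powr q * (wgt \<delta> \<gamma> z * pd k (comp T k i) z - 2 * (1 + q) * cw \<delta> \<gamma> * z $ k * comp T k i z)" for k
    proof -
      have "pd k (\<lambda>x. wgt \<delta> \<gamma> x powr (1 + q) * comp T k i x) z =
        wgt \<delta> \<gamma> z powr (1 + q) * pd k (comp T k i) z + (1 + q) * wgt \<delta> \<gamma> z powr (1 + q - 1) * pd k (wgt \<delta> \<gamma>) z * comp T k i z"
        using wz dT[OF z] by (simp add: pd_mult pd_powr)
      also have "\<dots> = wgt \<delta> \<gamma> z powr q * (wgt \<delta> \<gamma> z * pd k (comp T k i) z - 2 * (1 + q) * cw \<delta> \<gamma> * z $ k * comp T k i z)"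
        using wz by (simp add: pd_wgt powr_add algebra_simps)
      finally show ?thesis .
    qed
    then show ?thesis using wz by (simp add: sum_distrib_left)
  qed
  have pdG: "pd m (\<lambda>z. (1 / wgt \<delta> \<gamma> z powr q) * (\<Sum>k\<in>UNIV. pd k (\<lambda>x. wgt \<delta> \<gamma> x powr (1 + q) * comp T k i x) z)) y
     = pd m (\<lambda>z. \<Sum>k\<in>UNIV. wgt \<delta> \<gamma> z * pd k (comp T k i) z - 2 * (1 + q) * cw \<delta> \<gamma> * z $ k * comp T k i z) y" for m
    by (rule pd_local[OF open_ball yb inner])
  note dy = dT[OF yb] dpT[OF yb] Wpos[OF yb] \<open>y \<noteq> 0\<close>
  have ny: "norm y \<noteq> 0" using \<open>y \<noteq> 0\<close> by simp
  have nrm: "(norm y)\<^sup>2 = (y$1)\<^sup>2 + (y$2)\<^sup>2 + (y$3)\<^sup>2"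
    unfolding power2_norm_eq_inner inner_vec_def sum_3 by (simp add: power2_eq_square)
  have pw: "wgt \<delta> \<gamma> y powr (2 + q) = wgt \<delta> \<gamma> y * wgt \<delta> \<gamma> y powr (1 + q)"
  proof -
    have "wgt \<delta> \<gamma> y powr (2 + q) = wgt \<delta> \<gamma> y powr (1 + (1 + q))" by simp
    also have "\<dots> = wgt \<delta> \<gamma> y powr 1 * wgt \<delta> \<gamma> y powr (1 + q)" by (rule powr_add)
    finally show ?thesis using Wpos[OF yb] by simp
  qed
  have rs: "norm y * inverse (norm y) = 1" using ny by simp
  have pp: "wgt \<delta> \<gamma> y powr (1 + q) * inverse (wgt \<delta> \<gamma> y powr (1 + q)) = 1" using Wpos[OF yb] by simp
  have conj1: "(dr (\<lambda>z. (1 / wgt \<delta> \<gamma> z powr q) *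
          (\<Sum>k\<in>UNIV. pd k (\<lambda>x. wgt \<delta> \<gamma> x powr (1 + q) * comp T k i x) z)) y
    = (1 / wgt \<delta> \<gamma> y powr (1 + q)) *
          (\<Sum>k\<in>UNIV. pd k (\<lambda>x. wgt \<delta> \<gamma> x powr (2 + q) * dr (comp T k i) x) y)
      + ((dr (wgt \<delta> \<gamma>) y - wgt \<delta> \<gamma> y / norm y) * (\<Sum>k\<in>UNIV. ang k (comp T k i) y)
         + (1 + q) * (\<Sum>k\<in>UNIV. dr (pd k (wgt \<delta> \<gamma>)) y * comp T k i y)))"
    unfolding dr_def ang_def pdG
    apply (subst pd_wpow_sum[where a="1+q"])
       apply (simp add: dy)
      apply (simp add: dy ny)
     apply simp
    apply (simp add: dy ny pd_add pd_minus pd_diff pd_mult pd_const pd_sum pd_coord pd_divide pd_norm pd_powr pd_wgt sum_3 sym)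
    apply (simp only: divide_inverse power_inverse[symmetric] inverse_mult_distrib)
    using nrm rs by algebra
  have conj2: "(ang j (\<lambda>z. (1 / wgt \<delta> \<gamma> z powr q) *
          (\<Sum>k\<in>UNIV. pd k (\<lambda>x. wgt \<delta> \<gamma> x powr (1 + q) * comp T k i x) z)) y
    = (1 / wgt \<delta> \<gamma> y powr q) *
          (\<Sum>k\<in>UNIV. pd k (\<lambda>x. wgt \<delta> \<gamma> x powr (1 + q) * ang j (comp T k i) x) y)
      + (wgt \<delta> \<gamma> y *
           (\<Sum>k\<in>UNIV. (y $ j / (norm y)\<^sup>2) * ang k (comp T k i) y
              + (((if k = j then 1 else 0) * (norm y)\<^sup>2 - y $ k * y $ j) / (norm y) ^ 3)
                * dr (comp T k i) y)
         + (1 + q) * (\<Sum>k\<in>UNIV. ang j (pd k (wgt \<delta> \<gamma>)) y * comp T k i y)))"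
  proof -
    consider "j = 1" | "j = 2" | "j = 3" using exhaust_3[of j] by blast
    then show ?thesis
    proof cases
    case 1
    show ?thesis unfolding \<open>j = 1\<close> dr_def ang_def pdG
    apply (subst pd_wpow_sum[where a="q"])
       apply (simp add: dy)
      apply (simp add: dy ny)
     apply simp
    apply (simp add: dy ny pd_add pd_minus pd_diff pd_mult pd_const pd_sum pd_coord pd_divide pd_norm pd_powr pd_wgt sum_3 sym)
    apply (simp only: divide_inverse power_inverse[symmetric] inverse_mult_distrib)
    using nrm rs by algebra
    next
    case 2
    show ?thesis unfolding \<open>j = 2\<close> dr_def ang_def pdG
    apply (subst pd_wpow_sum[where a="q"])
       apply (simp add: dy)
      apply (simp add: dy ny)
     apply simp
    apply (simp add: dy ny pd_add pd_minus pd_diff pd_mult pd_const pd_sum pd_coord pd_divide pd_norm pd_powr pd_wgt sum_3 sym)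
    apply (simp only: divide_inverse power_inverse[symmetric] inverse_mult_distrib)
    using nrm rs by algebra
    next
    case 3
    show ?thesis unfolding \<open>j = 3\<close> dr_def ang_def pdG
    apply (subst pd_wpow_sum[where a="q"])
       apply (simp add: dy)
      apply (simp add: dy ny)
     apply simp
    apply (simp add: dy ny pd_add pd_minus pd_diff pd_mult pd_const pd_sum pd_coord pd_divide pd_norm pd_powr pd_wgt sum_3 sym)
    apply (simp only: divide_inverse power_inverse[symmetric] inverse_mult_distrib)
    using nrm rs by algebra
    qed
  qed
  show ?thesis using conj1 conj2 by blast
qed


end
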